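(* Let $n\in\mathbb{N}$, let $a\ge2$ be an integer, $k_1,\ldots,k_n\in\mathbb{N}$, $K=\operatorname{lcm}(k_1,\ldots,k_n)$, and let $f_1,\ldots,f_n,g_1,\ldots,g_n$ be arbitrary arithmetic functions. For each tuple $d_1|k_1,\ldots,d_n|k_n$ write $M=\operatorname{lcm}(d_1,\ldots,d_n)$, $L=K/M$, $F=\prod_{i=1}^n f_i(d_i)g_i(k_i/d_i)$, and put $G(j)=\prod_{i=1}^n s^{(a)}_{f_i,g_i,\mathbf 1}(k_i,j)$ for $j\in\mathbb{N}_0$. Then $$\sum_{j=1}^{K^a}\log\Gamma\Bigl(\frac{j}{K^a}\Bigr)G(j)=\frac{K^a}{2}\log(2\pi)\sum_{d_1|k_1,\ldots,d_n|k_n}\frac{F}{M^a}-\frac12\log(2\pi K^a)\prod_{i=1}^n(f_i*g_i)(k_i)+\frac a2\sum_{d_1|k_1,\ldots,d_n|k_n}(\log M)\,F,$$ $$\sum_{j=0}^{K^a}\binom{K^a}{j}G(j)=2^{K^a}\sum_{d_1|k_1,\ldots,d_n|k_n}\frac{F}{M^a}\sum_{\ell=1}^{M^a}(-1)^{\ell L^a}\cos^{K^a}\Bigl(\frac{\pi\ell}{M^a}\Bigr),$$ and for every integer $m\ge0$, $$\sum_{j=0}^{K^a-1}B_m\Bigl(\frac{j}{K^a}\Bigr)G(j)=\frac{B_m}{K^{a(m-1)}}\sum_{d_1|k_1,\ldots,d_n|k_n}M^{a(m-1)}F.$$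
   Context: An arithmetic function is a map $\mathbb{N}\to\mathbb{C}$; $(f*g)(n)=\sum_{d|n}f(d)g(n/d)$. For $a\in\mathbb{N}$ and $k\in\mathbb{N}$, $j\in\mathbb{N}_0$, $s^{(a)}_{f,g,\mathbf 1}(k,j)=\sum_{d|k,\ d^a|j} f(d)\,g(k/d)$ (for $j=0$ every $d^a$ divides $j$, so $s^{(a)}_{f,g,\mathbf 1}(k,0)=(f*g)(k)$). $\Gamma$ is the Gamma function. The Bernoulli polynomials are defined by $\frac{te^{xt}}{e^t-1}=\sum_{m\ge0}B_m(x)\frac{t^m}{m!}$ and $B_m=B_m(0)$ are the Bernoulli numbers. *)

theory Defs
  imports "HOL-Analysis.Analysis" "HOL-Computational_Algebra.Formal_Power_Series"
begin

definition dirichlet_conv :: "(nat \<Rightarrow> complex) \<Rightarrow> (nat \<Rightarrow> complex) \<Rightarrow> nat \<Rightarrow> complex" where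
  "dirichlet_conv f g n = (\<Sum>d\<in>{d. d dvd n}. f d * g (n div d))"

definition s_fun :: "nat \<Rightarrow> (nat \<Rightarrow> complex) \<Rightarrow> (nat \<Rightarrow> complex) \<Rightarrow> nat \<Rightarrow> nat \<Rightarrow> complex" where
  "s_fun a f g k j = (\<Sum>d\<in>{d. d dvd k \<and> d ^ a dvd j}. f d * g (k div d))"

definition bernpoly :: "nat \<Rightarrow> real \<Rightarrow> real" where
  "bernpoly m x = fact m * fps_nth (fps_X * fps_exp x / (fps_exp 1 - 1)) m"

definition bernoulli_num :: "nat \<Rightarrow> real" where
  "bernoulli_num m = bernpoly m 0"

end

theory Submission imports Defs "HOL-Computational_Algebra.Fundamental_Theorem_Algebra" begin


lemma norm_1_minus_exp:
  fixes \<theta> :: real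
  shows "cmod (1 - exp (\<i> * of_real \<theta>)) = 2 * \<bar>sin (\<theta>/2)\<bar>"
proof -
  have e: "exp (\<i> * of_real \<theta>) = Complex (cos \<theta>) (sin \<theta>)"
    by (simp add: exp_Euler cos_of_real sin_of_real complex_eq_iff)
  have "(cmod (1 - exp (\<i> * of_real \<theta>)))^2 = (1 - cos \<theta>)^2 + (sin \<theta>)^2"
    by (simp add: e cmod_def)
  also have "\<dots> = 2 - 2 * cos \<theta>" using sin_cos_squared_add[of \<theta>] by (simp add: power2_eq_square algebra_simps)
  also have "cos \<theta> = 1 - 2 * sin (\<theta>/2)^2" using cos_double_sin[of "\<theta>/2"] by simp
  finally have "(cmod (1 - exp (\<i> * of_real \<theta>)))^2 = (2 * \<bar>sin (\<theta>/2)\<bar>)^2"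
    by (simp add: power2_eq_square algebra_simps)
  thus ?thesis by (rule power2_eq_imp_eq) auto
qed

lemma poly_geom_roots:
  fixes N :: nat
  assumes N: "N \<ge> 1"
  shows "(\<Prod>t\<in>{1..<N}. (1 - exp(2 * of_real pi * \<i> * of_nat t / of_nat N))) = (of_nat N :: complex)"
proof -
  define q :: "complex poly" where "q = (\<Sum>k<N. monom 1 k)"
  have pq: "poly q z = (\<Sum>k<N. z^k)" for z by (simp add: q_def poly_sum poly_monom)
  have qX: "q * [:-1,1:] = monom 1 N - 1"
  proof -
    have "q * [:-1,1:] = (\<Sum>k<N. monom 1 (Suc k) - monom 1 k)"
      unfolding q_def sum_distrib_right
      by (intro sum.cong refl) (simp add: monom_Suc algebra_simps)
    also have "\<dots> = monom 1 N - monom 1 0" by (rule sum_lessThan_telescope)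
    finally show ?thesis by (simp add: monom_0 one_pCons)
  qed
  have pq2: "poly q z * (z - 1) = z^N - 1" for z
    using arg_cong[OF qX, of "\<lambda>p. poly p z"] by (simp add: poly_monom algebra_simps)
  have roots: "{z. poly q z = 0} = {z. z^N = 1 \<and> z \<noteq> 1}"
  proof (intro set_eqI iffI)
    fix z assume "z \<in> {z. poly q z = 0}"
    hence z: "poly q z = 0" by simp
    have "z \<noteq> 1" using z N by (auto simp: pq)
    moreover have "z^N = 1" using pq2[of z] z by simp
    ultimately show "z \<in> {z. z^N = 1 \<and> z \<noteq> 1}" by simp
  next
    fix z :: complex assume "z \<in> {z. z^N = 1 \<and> z \<noteq> 1}" thus "z \<in> {z. poly q z = 0}" using pq2[of z] by simp
  qed
  have rsq: "rsquarefree q" unfolding rsquarefree_roots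
  proof (intro allI notI)
    fix a assume h: "poly q a = 0 \<and> poly (pderiv q) a = 0"
    have d: "pderiv (q * [:-1,1:]) = pderiv (monom 1 N - 1)" using qX by simp
    have d1: "pderiv (q * [:-1,1:]) = pderiv q * [:-1,1:] + q"
      by (simp only: pderiv_mult) (simp add: pderiv_pCons)
    have d2: "pderiv (monom 1 N - 1 :: complex poly) = monom (of_nat N) (N - 1)"
      by (simp add: pderiv_diff pderiv_monom)
    have "poly (pderiv q * [:-1,1:] + q) a = poly (monom (of_nat N) (N - 1)) a"
      using d d1 d2 by simp
    hence "poly (pderiv q) a * (a - 1) + poly q a = of_nat N * a^(N-1)"
      by (simp add: poly_monom algebra_simps)
    hence "of_nat N * a^(N-1) = 0" using h by simp
    moreover have "a^N = 1" using h roots by auto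
    hence "a \<noteq> 0" using N by (auto simp: power_0_left)
    ultimately show False using N by simp
  qed
  have cq: "coeff q k = (if k < N then 1 else 0)" for k
    by (simp add: q_def coeff_sum coeff_monom)
  have degq: "degree q = N - 1"
  proof (rule antisym)
    show "degree q \<le> N - 1" by (rule degree_le) (auto simp: cq)
    show "N - 1 \<le> degree q" by (rule le_degree) (use N in \<open>simp add: cq\<close>)
  qed
  have lc: "lead_coeff q = 1" using N by (simp add: degq cq)
  have dec: "(\<Prod>z|poly q z = 0. [:-z, 1:]) = q"
    using complex_poly_decompose_rsquarefree[OF rsq] lc by simp
  have fin: "finite {z. poly q z = 0}"
    by (rule poly_roots_finite) (use N in \<open>auto simp: cq poly_eq_iff intro!: exI[of _ 0]\<close>)
  have "of_nat N = poly q 1" by (simp add: pq)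
  also have "\<dots> = (\<Prod>z|poly q z = 0. 1 - z)"
    by (subst dec[symmetric]) (simp add: poly_prod fin)
  also have "\<dots> = (\<Prod>t\<in>{1..<N}. (1 - exp(2 * of_real pi * \<i> * of_nat t / of_nat N)))"
  proof (rule prod.reindex_bij_betw[symmetric])
    let ?w = "\<lambda>t::nat. exp(2 * of_real pi * \<i> * of_nat t / of_nat N)"
    show "bij_betw ?w {1..<N} {z. poly q z = 0}"
      unfolding bij_betw_def inj_on_def roots
    proof (intro conjI ballI impI set_eqI iffI)
      fix x y assume "x \<in> {1..<N}" "y \<in> {1..<N}" "?w x = ?w y"
      thus "x = y" using complex_root_unity_eq[of N x y] N by auto
    next
      fix z assume "z \<in> ?w ` {1..<N}"
      then obtain t where t: "t \<in> {1..<N}" "z = ?w t" by auto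
      have "\<not> N dvd t" using t(1) by (auto dest: dvd_imp_le)
      thus "z \<in> {z. z^N = 1 \<and> z \<noteq> 1}" using t complex_root_unity[of N t] complex_root_unity_eq_1[of N t] N by auto
    next
      fix z :: complex assume "z \<in> {z. z^N = 1 \<and> z \<noteq> 1}"
      hence z: "z^N = 1" "z \<noteq> 1" by auto
      then obtain j where j: "j < N" "z = ?w j" using complex_roots_unity[OF N] by auto
      have "j \<noteq> 0" using j z by (auto intro: Nat.gr0I)
      thus "z \<in> ?w ` {1..<N}" using j by auto
    qed
  qed
  finally show ?thesis by simp
qed

lemma sin_prod:
  fixes N :: nat
  assumes N: "N \<ge> 1"
  shows "(\<Prod>t\<in>{1..<N}. 2 * sin (pi * real t / real N)) = real N"
proof -
  have "real N = cmod (of_nat N :: complex)" by simp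
  also have "\<dots> = (\<Prod>t\<in>{1..<N}. cmod (1 - exp(2 * of_real pi * \<i> * of_nat t / of_nat N)))"
    by (subst poly_geom_roots[OF N, symmetric]) (simp add: prod_norm)
  also have "\<dots> = (\<Prod>t\<in>{1..<N}. 2 * sin (pi * real t / real N))"
  proof (intro prod.cong refl)
    fix t assume t: "t \<in> {1..<N}"
    have "2 * of_real pi * \<i> * of_nat t / of_nat N = \<i> * of_real (2 * pi * real t / real N)"
      by simp
    hence "cmod (1 - exp(2 * of_real pi * \<i> * of_nat t / of_nat N)) = 2 * \<bar>sin ((2 * pi * real t / real N)/2)\<bar>"
      by (simp only: norm_1_minus_exp)
    hence "cmod (1 - exp(2 * of_real pi * \<i> * of_nat t / of_nat N)) = 2 * \<bar>sin (pi * real t / real N)\<bar>"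
      by simp
    moreover have "sin (pi * real t / real N) > 0"
      using t by (intro sin_gt_zero) (auto simp: field_simps)
    ultimately show "cmod (1 - exp(2 * of_real pi * \<i> * of_nat t / of_nat N)) = 2 * sin (pi * real t / real N)" by simp
  qed
  finally show ?thesis by simp
qed



lemma Gamma_reflection_real:
  fixes x :: real
  shows "Gamma x * Gamma (1 - x) = pi / sin (pi * x)"
proof -
  have e: "(1::complex) - of_real x = of_real (1 - x)" by simp
  have "complex_of_real (Gamma x * Gamma (1 - x)) = Gamma (of_real x) * Gamma (1 - of_real x)"
    by (simp only: e Gamma_complex_of_real of_real_mult)
  also have "\<dots> = of_real pi / sin (of_real pi * of_real x)" by (rule Gamma_reflection_complex)
  also have "\<dots> = complex_of_real (pi / sin (pi * x))"
    by (simp add: sin_of_real flip: of_real_mult)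
  finally show ?thesis by (simp only: of_real_eq_iff)
qed

lemma lnGamma_sum:
  fixes N :: nat
  assumes N: "N \<ge> 1"
  shows "(\<Sum>t=1..N. ln (Gamma (real t / real N))) = (real N - 1) / 2 * ln (2 * pi) - ln (real N) / 2"
proof -
  define S where "S = (\<Sum>t\<in>{1..<N}. ln (Gamma (real t / real N)))"
  have "{1..N} = insert N {1..<N}" using N by auto
  hence s1: "(\<Sum>t=1..N. ln (Gamma (real t / real N))) = S"
    using N by (simp add: S_def)
  have s2: "S = (\<Sum>t\<in>{1..<N}. ln (Gamma (1 - real t / real N)))"
    unfolding S_def
  proof (rule sum.reindex_bij_witness[of _ "\<lambda>t. N - t" "\<lambda>t. N - t"])
    fix t assume t: "t \<in> {1..<N}"
    show "N - (N - t) = t" using t by auto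
    show "N - t \<in> {1..<N}" using t by auto
    have "1 - real (N - t) / real N = real t / real N" using t N by (simp add: of_nat_diff field_simps)
    thus "ln (Gamma (1 - real (N - t) / real N)) = ln (Gamma (real t / real N))" by simp
  qed auto
  have pos: "sin (pi * (real t / real N)) > 0" if "t \<in> {1..<N}" for t
    using that by (intro sin_gt_zero) (auto simp: field_simps)
  have gp: "Gamma (real t / real N) > 0" "Gamma (1 - real t / real N) > 0" if "t \<in> {1..<N}" for t
    using that by (auto intro!: Gamma_real_pos simp: field_simps)
  have "2 * S = (\<Sum>t\<in>{1..<N}. ln (Gamma (real t / real N)) + ln (Gamma (1 - real t / real N)))"
    using s2 by (simp add: sum.distrib S_def)
  also have "\<dots> = (\<Sum>t\<in>{1..<N}. ln (Gamma (real t / real N) * Gamma (1 - real t / real N)))"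
  proof (intro sum.cong refl)
    fix t assume t: "t \<in> {1..<N}"
    have "Gamma (real t / real N) \<noteq> 0" "Gamma (1 - real t / real N) \<noteq> 0" using gp[OF t] by auto
    thus "ln (Gamma (real t / real N)) + ln (Gamma (1 - real t / real N)) = ln (Gamma (real t / real N) * Gamma (1 - real t / real N))"
      by (simp add: ln_mult)
  qed
  also have "\<dots> = (\<Sum>t\<in>{1..<N}. ln (2 * pi) - ln (2 * sin (pi * real t / real N)))"
  proof (intro sum.cong refl)
    fix t assume t: "t \<in> {1..<N}"
    have "ln (Gamma (real t / real N) * Gamma (1 - real t / real N)) = ln (pi / sin (pi * (real t / real N)))"
      by (simp only: Gamma_reflection_real)
    also have "\<dots> = ln ((2 * pi) / (2 * sin (pi * real t / real N)))" by simp
    also have "\<dots> = ln (2 * pi) - ln (2 * sin (pi * real t / real N))"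
      using pos[OF t] by (subst ln_div) auto
    finally show "ln (Gamma (real t / real N) * Gamma (1 - real t / real N)) = ln (2 * pi) - ln (2 * sin (pi * real t / real N))" .
  qed
  also have "\<dots> = (real N - 1) * ln (2 * pi) - ln (\<Prod>t\<in>{1..<N}. 2 * sin (pi * real t / real N))"
    using N pos by (subst ln_prod) (force simp: sum_subtractf of_nat_diff)+
  also have "\<dots> = (real N - 1) * ln (2 * pi) - ln (real N)" by (simp only: sin_prod[OF N])
  finally show ?thesis using s1 by simp
qed



definition sc :: "real \<Rightarrow> real fps \<Rightarrow> real fps" where
  "sc c A = Abs_fps (\<lambda>i. c^i * (fps_nth A i))"

lemma sc_nth [simp]: "fps_nth (sc c A) i = c^i * (fps_nth A i)" by (simp add: sc_def)

lemma sc_mult: "sc c (A * B) = sc c A * sc c B"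
proof (rule fps_ext)
  fix n
  have "fps_nth (sc c (A * B)) n = (\<Sum>i=0..n. c^n * ((fps_nth A i) * (fps_nth B (n-i))))"
    by (simp add: fps_mult_nth sum_distrib_left)
  also have "\<dots> = (\<Sum>i=0..n. (c^i * (fps_nth A i)) * (c^(n-i) * (fps_nth B (n-i))))"
  proof (intro sum.cong refl)
    fix i assume "i \<in> {0..n}"
    hence "c^n = c^i * c^(n-i)" by (simp flip: power_add)
    thus "c^n * ((fps_nth A i) * (fps_nth B (n-i))) = (c^i * (fps_nth A i)) * (c^(n-i) * (fps_nth B (n-i)))" by simp
  qed
  also have "\<dots> = (fps_nth (sc c A * sc c B) n)" by (simp add: fps_mult_nth)
  finally show "fps_nth (sc c (A * B)) n = (fps_nth (sc c A * sc c B) n)" .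
qed

lemma sc_exp1: "sc c (fps_exp 1 - 1) = fps_exp c - 1"
  by (rule fps_ext) (simp add: power_0_left)

lemma sc_X: "sc c fps_X = fps_const c * fps_X"
  by (rule fps_ext) (auto simp: le_Suc_eq)

lemma exp_diff_ne0: "fps_exp (c::real) - 1 \<noteq> 0" if "c \<noteq> 0"
proof
  assume "fps_exp c - 1 = 0"
  hence "(fps_nth (fps_exp c - 1) 1) = 0" by simp
  thus False using that by simp
qed

lemma B_mul: "fps_X * fps_exp x / (fps_exp 1 - 1) * (fps_exp 1 - 1) = fps_X * fps_exp (x::real)"
proof (rule fps_times_divide_eq)
  show "fps_exp 1 - 1 \<noteq> (0::real fps)" by (rule exp_diff_ne0) simp
  have "subdegree (fps_exp 1 - 1 :: real fps) \<le> 1" by (rule subdegree_leI) simp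
  moreover have "subdegree (fps_X * fps_exp x :: real fps) = 1"
  proof -
    have "fps_exp x \<noteq> (0::real fps)" by (metis fps_exp_nth power_0 fps_nonzero_nth divide_eq_0_iff fact_0 of_nat_1 one_neq_zero)
    hence "subdegree (fps_X * fps_exp x) = subdegree (fps_X :: real fps) + subdegree (fps_exp x)"
      by (intro subdegree_mult) auto
    thus ?thesis by simp
  qed
  ultimately show "subdegree (fps_exp 1 - 1 :: real fps) \<le> subdegree (fps_X * fps_exp x :: real fps)" by simp
qed

lemma exp_tele: "(\<Sum>t<n. fps_exp (real t * c)) * (fps_exp c - 1) = fps_exp (real n * c) - (1 :: real fps)"
proof (induction n)
  case 0 thus ?case by simp
next
  case (Suc n)
  have "fps_exp (real n * c) * (fps_exp c - 1) = fps_exp (real (Suc n) * c) - fps_exp (real n * c)"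
    by (simp add: algebra_simps fps_exp_add_mult[symmetric])
  thus ?case using Suc by (simp add: algebra_simps)
qed

lemma raabe:
  fixes N :: nat
  assumes N: "N \<ge> 1"
  shows "(\<Sum>t<N. bernpoly m (real t / real N)) = real N * (1 / real N)^m * bernoulli_num m"
proof -
  define D1 :: "real fps" where "D1 = fps_exp 1 - 1"
  define c :: real where "c = 1 / real N"
  define Dc :: "real fps" where "Dc = fps_exp c - 1"
  define B where "B x = fps_X * fps_exp x / D1" for x
  have Bmul: "B x * D1 = fps_X * fps_exp x" for x unfolding B_def D1_def by (rule B_mul)
  define S where "S = (\<Sum>t<N. B (real t / real N))"
  have "S * D1 * Dc = fps_X * ((\<Sum>t<N. fps_exp (real t * c)) * Dc)"
    unfolding S_def sum_distrib_right Bmul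
    by (simp add: sum_distrib_left c_def algebra_simps)
  also have "\<dots> = fps_X * D1" unfolding Dc_def exp_tele D1_def using N by (simp add: c_def)
  finally have SD: "S * (D1 * Dc) = fps_X * D1" by (simp add: algebra_simps)
  define T where "T = fps_const (real N) * sc c (B 0)"
  have "sc c (B 0 * D1) = sc c fps_X" using Bmul[of 0] by simp
  hence "sc c (B 0) * Dc = fps_const c * fps_X" by (simp add: sc_mult D1_def sc_exp1 Dc_def sc_X)
  hence "T * Dc = fps_const (real N) * (fps_const c * fps_X)" by (simp add: T_def mult.assoc)
  hence "T * Dc = fps_const (real N) * fps_const c * fps_X" by (simp only: mult.assoc)
  also have "fps_const (real N) * fps_const c = 1" using N by (simp add: c_def flip: fps_const_mult)
  finally have "T * (D1 * Dc) = fps_X * D1" by (simp add: algebra_simps)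
  with SD have "S * (D1 * Dc) = T * (D1 * Dc)" by (simp only:)
  moreover have "D1 * Dc \<noteq> 0" unfolding D1_def Dc_def c_def using N
    by (intro no_zero_divisors exp_diff_ne0) auto
  ultimately have "S = T" using mult_right_cancel by blast
  have "(\<Sum>t<N. bernpoly m (real t / real N)) = fact m * fps_nth S m"
    by (simp add: S_def bernpoly_def B_def D1_def fps_sum_nth sum_distrib_left)
  also have "\<dots> = real N * (1 / real N)^m * bernoulli_num m"
    by (simp add: \<open>S = T\<close> T_def c_def bernoulli_num_def bernpoly_def B_def D1_def)
  finally show ?thesis .
qed



lemma exp_i_real: "exp (\<i> * complex_of_real y) = Complex (cos y) (sin y)"
  by (simp add: exp_Euler cos_of_real sin_of_real complex_eq_iff)

lemma one_plus_exp_pow: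
  fixes x :: real and P :: nat
  shows "(1 + exp (\<i> * of_real x))^P = exp (\<i> * of_real (real P * x / 2)) * of_real ((2 * cos (x/2))^P)"
proof -
  have "1 + exp (\<i> * of_real x) = exp (\<i> * of_real (x/2)) * of_real (2 * cos (x/2))"
  proof -
    have c: "cos x = 2 * cos (x/2)^2 - 1" using cos_double_cos[of "x/2"] by simp
    have s: "sin x = 2 * sin (x/2) * cos (x/2)" using sin_double[of "x/2"] by simp
    show ?thesis unfolding exp_i_real by (simp add: complex_eq_iff c s power2_eq_square)
  qed
  hence "(1 + exp (\<i> * of_real x))^P = exp (\<i> * of_real (x/2))^P * of_real ((2 * cos (x/2))^P)"
    by (simp add: power_mult_distrib)
  also have "exp (\<i> * of_real (x/2))^P = exp (\<i> * of_real (real P * x / 2))"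
    by (simp add: exp_of_nat_mult[symmetric] mult_ac)
  finally show ?thesis .
qed

lemma roots_filter:
  fixes q j :: nat
  assumes q: "q \<ge> 1"
  shows "(\<Sum>l=1..q. exp (\<i> * of_real (2 * pi * real l / real q))^j) = (if q dvd j then of_nat q else 0)"
proof -
  define z where "z = exp (2 * of_real pi * \<i> * of_nat j / of_nat q)"
  have e: "exp (\<i> * of_real (2 * pi * real l / real q))^j = z^l" for l
    unfolding z_def exp_of_nat_mult[symmetric] by (simp add: mult_ac)
  have zq: "z^q = 1" unfolding z_def using complex_root_unity[of q j] q by simp
  have "(\<Sum>l=1..q. z^l) = z * (\<Sum>l<q. z^l)"
    by (simp add: sum.atLeast1_atMost_eq sum_distrib_left)
  also have "\<dots> = (if q dvd j then of_nat q else 0)"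
  proof (cases "q dvd j")
    case True
    hence "z = 1" unfolding z_def using complex_root_unity_eq_1[of q j] q by simp
    thus ?thesis using True by simp
  next
    case False
    hence "z \<noteq> 1" unfolding z_def using complex_root_unity_eq_1[of q j] q by simp
    thus ?thesis using False by (simp add: geometric_sum zq)
  qed
  finally show ?thesis by (simp only: e)
qed

lemma binom_filter:
  fixes q N P :: nat
  assumes q: "q \<ge> 1" and P: "P = q * N"
  shows "of_nat q * (\<Sum>j=0..P. if q dvd j then of_nat (P choose j) else (0::complex))
     = of_nat (2^P) * of_real (\<Sum>l=1..q. (-1)^(l*N) * cos (pi * real l / real q)^P)"
proof -
  define w where "w l = exp (\<i> * of_real (2 * pi * real l / real q))" for l :: nat
  have "of_nat q * (\<Sum>j=0..P. if q dvd j then of_nat (P choose j) else (0::complex))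
      = (\<Sum>j=0..P. of_nat (P choose j) * (\<Sum>l=1..q. w l ^ j))"
  proof -
    have "of_nat q * (\<Sum>j=0..P. if q dvd j then of_nat (P choose j) else (0::complex)) = (\<Sum>j=0..P. of_nat q * (if q dvd j then of_nat (P choose j) else (0::complex)))"
      by (rule sum_distrib_left)
    also have "\<dots> = (\<Sum>j=0..P. of_nat (P choose j) * (\<Sum>l=1..q. w l ^ j))"
    proof (intro sum.cong refl)
    fix j
    show "of_nat q * (if q dvd j then of_nat (P choose j) else (0::complex)) = of_nat (P choose j) * (\<Sum>l=1..q. w l ^ j)"
      unfolding w_def roots_filter[OF q] by simp
    qed
    finally show ?thesis .
  qed
  also have "\<dots> = (\<Sum>l=1..q. (\<Sum>j=0..P. of_nat (P choose j) * w l ^ j))"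
    unfolding sum_distrib_left by (rule sum.swap)
  also have "\<dots> = (\<Sum>l=1..q. (1 + w l)^P)"
  proof (intro sum.cong refl)
    fix l
    have "(1 + w l)^P = (w l + 1)^P" by (simp only: add.commute)
    also have "\<dots> = (\<Sum>k\<le>P. of_nat (P choose k) * w l ^ k * 1 ^ (P - k))" by (rule binomial_ring)
    finally show "(\<Sum>j=0..P. of_nat (P choose j) * w l ^ j) = (1 + w l)^P"
      by (simp add: atLeast0AtMost)
  qed
  also have "\<dots> = (\<Sum>l=1..q. of_nat (2^P) * of_real ((-1)^(l*N) * cos (pi * real l / real q)^P))"
  proof (intro sum.cong refl)
    fix l assume "l \<in> {1..q}"
    have a: "real P * (2 * pi * real l / real q) / 2 = real (l * N) * pi"
      using q by (simp add: P field_simps)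
    have b: "2 * pi * real l / real q / 2 = pi * real l / real q" by simp
    have c: "exp (\<i> * complex_of_real (real (l * N) * pi)) = (-1)^(l*N)"
      unfolding exp_i_real using cos_npi[of "l*N"] sin_npi[of "l*N"] by (simp only: complex_eq_iff) simp
    show "(1 + w l)^P = of_nat (2^P) * of_real ((-1)^(l*N) * cos (pi * real l / real q)^P)"
      unfolding w_def one_plus_exp_pow a b c by (simp add: power_mult_distrib)
  qed
  also have "\<dots> = of_nat (2^P) * of_real (\<Sum>l=1..q. (-1)^(l*N) * cos (pi * real l / real q)^P)"
    by (simp add: sum_distrib_left)
  finally show ?thesis .
qed



lemma lcm_pow_nat: "lcm (x^e) (y^e) = (lcm x y)^e" for x y :: nat
proof (cases "gcd x y = 0")
  case True thus ?thesis by (cases e) auto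
next
  case False
  have "lcm (x^e) (y^e) * gcd x y ^ e = x^e * y^e"
    using prod_gcd_lcm_nat[of "x^e" "y^e"] by (simp add: gcd_exp mult.commute)
  also have "\<dots> = (x * y)^e" by (simp add: power_mult_distrib)
  also have "\<dots> = (lcm x y * gcd x y)^e" using prod_gcd_lcm_nat[of x y] by (simp add: mult.commute)
  also have "\<dots> = lcm x y ^ e * gcd x y ^ e" by (rule power_mult_distrib)
  finally show ?thesis using False by auto
qed

lemma Lcm_pow_nat:
  fixes f :: "'a \<Rightarrow> nat"
  assumes "finite A"
  shows "Lcm ((\<lambda>x. f x ^ e) ` A) = Lcm (f ` A) ^ e"
  using assms by (induction A rule: finite_induct) (auto simp: lcm_pow_nat)

lemma Lcm_pow_dvd_iff:
  fixes f :: "'a \<Rightarrow> nat"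
  assumes "finite A"
  shows "Lcm (f ` A) ^ e dvd j \<longleftrightarrow> (\<forall>x\<in>A. f x ^ e dvd j)"
  by (simp add: Lcm_pow_nat[OF assms, symmetric] Lcm_dvd_iff)

lemma G_eq:
  fixes k :: "nat \<Rightarrow> nat" and f g :: "nat \<Rightarrow> nat \<Rightarrow> complex"
  assumes k: "\<forall>i<n. k i \<ge> 1"
  shows "(\<Prod>i<n. s_fun a (f i) (g i) (k i) j) =
    (\<Sum>d\<in>PiE {..<n} (\<lambda>i. {d. d dvd k i}). if Lcm (d ` {..<n}) ^ a dvd j then (\<Prod>i<n. f i (d i) * g i (k i div d i)) else 0)"
proof -
  have fin: "finite {d. d dvd k i}" if "i < n" for i
    using k that by (intro finite_divisors_nat) auto
  have "(\<Prod>i<n. s_fun a (f i) (g i) (k i) j) = (\<Sum>d\<in>PiE {..<n} (\<lambda>i. {d. d dvd k i \<and> d ^ a dvd j}). \<Prod>i<n. f i (d i) * g i (k i div d i))"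
    unfolding s_fun_def using fin by (intro prod_sum_PiE) auto
  also have "PiE {..<n} (\<lambda>i. {d. d dvd k i \<and> d ^ a dvd j}) = {d \<in> PiE {..<n} (\<lambda>i. {d. d dvd k i}). Lcm (d ` {..<n}) ^ a dvd j}"
  proof (rule set_eqI)
    fix d :: "nat \<Rightarrow> nat"
    have "Lcm (d`{..<n})^a dvd j \<longleftrightarrow> (\<forall>i\<in>{..<n}. d i ^ a dvd j)" by (rule Lcm_pow_dvd_iff) simp
    thus "d \<in> PiE {..<n} (\<lambda>i. {d. d dvd k i \<and> d ^ a dvd j}) \<longleftrightarrow> d \<in> {d \<in> PiE {..<n} (\<lambda>i. {d. d dvd k i}). Lcm (d ` {..<n}) ^ a dvd j}"
      unfolding PiE_iff by blast
  qed
  also have "(\<Sum>d\<in>\<dots>. \<Prod>i<n. f i (d i) * g i (k i div d i)) = (\<Sum>d\<in>PiE {..<n} (\<lambda>i. {d. d dvd k i}). if Lcm (d ` {..<n}) ^ a dvd j then (\<Prod>i<n. f i (d i) * g i (k i div d i)) else 0)"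
    using fin by (intro sum.inter_filter) (auto intro!: finite_PiE)
  finally show ?thesis .
qed

lemma swap_lemma:
  fixes h :: "nat \<Rightarrow> complex"
  assumes "finite J" "finite D"
  shows "(\<Sum>j\<in>J. h j * (\<Sum>d\<in>D. if P d j then F d else 0)) = (\<Sum>d\<in>D. F d * (\<Sum>j\<in>J. if P d j then h j else 0))"
proof -
  have "(\<Sum>j\<in>J. h j * (\<Sum>d\<in>D. if P d j then F d else 0)) = (\<Sum>j\<in>J. \<Sum>d\<in>D. if P d j then F d * h j else 0)"
    unfolding sum_distrib_left by (intro sum.cong refl) (simp add: mult.commute)
  also have "\<dots> = (\<Sum>d\<in>D. \<Sum>j\<in>J. if P d j then F d * h j else 0)" by (rule sum.swap)
  also have "\<dots> = (\<Sum>d\<in>D. F d * (\<Sum>j\<in>J. if P d j then h j else 0))"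
    unfolding sum_distrib_left by (intro sum.cong refl) simp
  finally show ?thesis .
qed

lemma dvd_reindex:
  fixes h :: "nat \<Rightarrow> 'b::comm_monoid_add"
  assumes q: "q \<ge> 1" and fin: "finite A" and eq: "{j\<in>A. q dvd j} = (\<lambda>t. q * t) ` B"
  shows "(\<Sum>j\<in>A. if q dvd j then h j else 0) = (\<Sum>t\<in>B. h (q * t))"
proof -
  have "(\<Sum>j\<in>A. if q dvd j then h j else 0) = (\<Sum>j\<in>{j\<in>A. q dvd j}. h j)"
    using fin by (rule sum.inter_filter[symmetric])
  also have "\<dots> = (\<Sum>t\<in>B. h (q * t))" unfolding eq using q
    by (subst sum.reindex) (auto simp: inj_on_def)
  finally show ?thesis .
qed

lemma set_eq1: "q \<ge> 1 \<Longrightarrow> {j\<in>{1..q*N}. q dvd j} = (\<lambda>t. q * t) ` {1..N::nat}"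
  by (auto elim!: dvdE intro!: image_eqI)
lemma set_eq2: "q \<ge> 1 \<Longrightarrow> {j\<in>{0..q*N}. q dvd j} = (\<lambda>t. q * t) ` {0..N::nat}"
  by (auto elim!: dvdE intro!: image_eqI)
lemma set_eq3: "q \<ge> 1 \<Longrightarrow> {j\<in>{0..<q*N}. q dvd j} = (\<lambda>t. q * t) ` {..<N::nat}"
  by (auto elim!: dvdE intro!: image_eqI)



lemma real_id1:
  fixes Mr Lr :: real and a :: nat
  assumes "Mr > 0" "Lr > 0"
  shows "(Lr^a - 1) / 2 * ln (2*pi) - ln (Lr^a) / 2
     = (Mr*Lr)^a / 2 * ln (2*pi) / Mr^a - ln (2 * pi * (Mr*Lr)^a) / 2 + real a / 2 * ln Mr"
proof -
  have "ln (2 * pi * (Mr*Lr)^a) = ln (2*pi) + real a * ln Mr + real a * ln Lr"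
    using assms by (simp add: ln_mult ln_realpow power_mult_distrib)
  moreover have "ln (Lr^a) = real a * ln Lr" using assms by (simp add: ln_realpow)
  moreover have "(Mr*Lr)^a / 2 * ln (2*pi) / Mr^a = Lr^a / 2 * ln (2*pi)"
    using assms by (simp add: power_mult_distrib field_simps)
  ultimately show ?thesis by (simp add: field_simps)
qed

lemma real_id3:
  fixes Mr Lr B :: real and a m :: nat
  assumes "Mr > 0" "Lr > 0"
  shows "Lr^a * (1 / Lr^a)^m * B = B / (Mr*Lr) powi (int a * (int m - 1)) * Mr powi (int a * (int m - 1))"
proof (cases m)
  case 0
  have h: "(Mr*Lr) powi (int a * (int m - 1)) = inverse ((Mr*Lr)^a)" "Mr powi (int a * (int m - 1)) = inverse (Mr^a)"
    using 0 by (simp_all add: power_int_def power_inverse power_mult_distrib)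
  show ?thesis unfolding h using 0 assms by (simp add: power_mult_distrib field_simps)
next
  case (Suc m')
  have e: "int a * (int m - 1) = int (a * m')" using Suc by simp
  show ?thesis unfolding e power_int_of_nat using Suc assms
    by (simp add: power_mult_distrib field_simps power_mult power_one_over flip: power_add)
qed



theorem theorem3:
  fixes n a :: nat
    and k :: "nat \<Rightarrow> nat"
    and f g :: "nat \<Rightarrow> nat \<Rightarrow> complex"
  assumes n_pos: "n \<ge> 1"
    and a_ge: "a \<ge> 2"
    and k_pos: "\<forall>i<n. k i \<ge> 1"
  defines "K \<equiv> Lcm (k ` {..<n})"
    and "D \<equiv> PiE {..<n} (\<lambda>i. {d. d dvd k i})"
    and "M \<equiv> (\<lambda>d::nat \<Rightarrow> nat. Lcm (d ` {..<n}))"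
    and "F \<equiv> (\<lambda>d::nat \<Rightarrow> nat. \<Prod>i<n. f i (d i) * g i (k i div d i))"
    and "G \<equiv> (\<lambda>j::nat. \<Prod>i<n. s_fun a (f i) (g i) (k i) j)"
  shows
    "((\<Sum>j=1..K^a. complex_of_real (ln (Gamma (real j / real (K^a)))) * G j)
       = of_real (real (K^a) / 2 * ln (2 * pi)) * (\<Sum>d\<in>D. F d / of_nat (M d ^ a))
         - of_real (ln (2 * pi * real (K^a)) / 2) * (\<Prod>i<n. dirichlet_conv (f i) (g i) (k i))
         + of_real (real a / 2) * (\<Sum>d\<in>D. of_real (ln (real (M d))) * F d))
   \<and> ((\<Sum>j=0..K^a. of_nat (K^a choose j) * G j)
       = of_nat (2 ^ (K^a)) * (\<Sum>d\<in>D. F d / of_nat (M d ^ a) *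
           of_real (\<Sum>l=1..M d ^ a. (-1) ^ (l * (Lcm (k ` {..<n}) div Lcm (d ` {..<n})) ^ a) * cos (pi * real l / real (M d ^ a)) ^ (K^a))))
   \<and> (\<forall>m::nat. (\<Sum>j=0..<K^a. of_real (bernpoly m (real j / real (K^a))) * G j)
       = of_real (bernoulli_num m / real K powi (int a * (int m - 1)))
           * (\<Sum>d\<in>D. of_real (real (M d) powi (int a * (int m - 1))) * F d))"
proof -
  have finD: "finite D" unfolding D_def using k_pos
    by (intro finite_PiE) (auto intro!: finite_divisors_nat)
  have Gexp: "G j = (\<Sum>d\<in>D. if M d ^ a dvd j then F d else 0)" for j
    unfolding G_def D_def M_def F_def by (rule G_eq[OF k_pos])
  have sumF: "(\<Prod>i<n. dirichlet_conv (f i) (g i) (k i)) = (\<Sum>d\<in>D. F d)"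
  proof -
    have "(\<Prod>i<n. dirichlet_conv (f i) (g i) (k i)) = G 0"
      unfolding G_def s_fun_def dirichlet_conv_def by simp
    thus ?thesis by (simp add: Gexp)
  qed
  have "0 \<notin> k ` {..<n}" using k_pos by force
  hence "K \<noteq> 0" unfolding K_def by (simp add: Lcm_0_iff_nat)
  hence Kpos: "K \<ge> 1" by simp
  define L where "L d = K div M d" for d
  have dprops: "M d \<ge> 1 \<and> K = M d * L d \<and> L d \<ge> 1" if d: "d \<in> D" for d
  proof -
    have di: "d i dvd k i" if "i < n" for i using d that by (auto simp: D_def PiE_iff)
    have "d i \<noteq> 0" if "i < n" for i
    proof
      assume "d i = 0"
      hence "k i = 0" using di[OF that] by simp
      thus False using k_pos that by auto
    qed
    hence "0 \<notin> d ` {..<n}" by force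
    hence M0: "M d \<noteq> 0" unfolding M_def by (simp add: Lcm_0_iff_nat)
    have "M d dvd K" unfolding M_def K_def
      by (intro Lcm_least) (auto intro: dvd_trans[OF di] dvd_Lcm)
    hence KL: "K = M d * L d" unfolding L_def by simp
    hence "L d \<noteq> 0" using Kpos by (cases "L d = 0") auto
    thus ?thesis using M0 KL by simp
  qed
  have Ka: "K^a = M d ^ a * L d ^ a" if "d \<in> D" for d
    using dprops[OF that] by (metis power_mult_distrib)
  have qpos: "M d ^ a \<ge> 1" if "d \<in> D" for d using dprops[OF that] by simp
  have MLpos: "real (M d) > 0" "real (L d) > 0" if "d \<in> D" for d using dprops[OF that] by auto

  have inner1: "(\<Sum>j\<in>{1..K^a}. if M d ^ a dvd j then complex_of_real (ln (Gamma (real j / real (K^a)))) else 0)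
      = of_real ((real (L d ^ a) - 1) / 2 * ln (2*pi) - ln (real (L d ^ a)) / 2)" if d: "d \<in> D" for d
  proof -
    have "(\<Sum>j\<in>{1..K^a}. if M d ^ a dvd j then complex_of_real (ln (Gamma (real j / real (K^a)))) else 0)
        = (\<Sum>t\<in>{1..L d ^ a}. complex_of_real (ln (Gamma (real (M d ^ a * t) / real (K^a)))))"
      unfolding Ka[OF d] by (rule dvd_reindex[OF qpos[OF d] _ set_eq1[OF qpos[OF d]]]) auto
    also have "\<dots> = of_real (\<Sum>t\<in>{1..L d ^ a}. ln (Gamma (real t / real (L d ^ a))))"
      unfolding of_real_sum Ka[OF d] using dprops[OF d] by (intro sum.cong refl) simp
    also have "\<dots> = of_real ((real (L d ^ a) - 1) / 2 * ln (2*pi) - ln (real (L d ^ a)) / 2)"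
      using dprops[OF d] by (subst lnGamma_sum) auto
    finally show ?thesis .
  qed
  have P1: "(\<Sum>j=1..K^a. complex_of_real (ln (Gamma (real j / real (K^a)))) * G j)
       = of_real (real (K^a) / 2 * ln (2 * pi)) * (\<Sum>d\<in>D. F d / of_nat (M d ^ a))
         - of_real (ln (2 * pi * real (K^a)) / 2) * (\<Prod>i<n. dirichlet_conv (f i) (g i) (k i))
         + of_real (real a / 2) * (\<Sum>d\<in>D. of_real (ln (real (M d))) * F d)"
  proof -
    have "(\<Sum>j=1..K^a. complex_of_real (ln (Gamma (real j / real (K^a)))) * G j)
        = (\<Sum>d\<in>D. F d * (\<Sum>j\<in>{1..K^a}. if M d ^ a dvd j then complex_of_real (ln (Gamma (real j / real (K^a)))) else 0))"
      unfolding Gexp by (rule swap_lemma) (simp_all add: finD)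
    also have "\<dots> = (\<Sum>d\<in>D. F d * of_real ((real (L d ^ a) - 1) / 2 * ln (2*pi) - ln (real (L d ^ a)) / 2))"
      by (intro sum.cong refl) (simp only: inner1)
    also have "\<dots> = (\<Sum>d\<in>D. of_real (real (K^a) / 2 * ln (2 * pi)) * (F d / of_nat (M d ^ a))
         - of_real (ln (2 * pi * real (K^a)) / 2) * F d
         + of_real (real a / 2) * (of_real (ln (real (M d))) * F d))"
    proof (intro sum.cong refl)
      fix d assume d: "d \<in> D"
      have r: "(real (L d ^ a) - 1) / 2 * ln (2*pi) - ln (real (L d ^ a)) / 2
         = real (K^a) / 2 * ln (2*pi) / real (M d ^ a) - ln (2 * pi * real (K^a)) / 2 + real a / 2 * ln (real (M d))"
        using real_id1[OF MLpos[OF d], of a] unfolding Ka[OF d] by (simp add: power_mult_distrib)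
      have q0: "complex_of_nat (M d ^ a) \<noteq> 0" using dprops[OF d] by (simp del: of_nat_power)
      show "F d * of_real ((real (L d ^ a) - 1) / 2 * ln (2*pi) - ln (real (L d ^ a)) / 2)
          = of_real (real (K^a) / 2 * ln (2 * pi)) * (F d / of_nat (M d ^ a))
         - of_real (ln (2 * pi * real (K^a)) / 2) * F d
         + of_real (real a / 2) * (of_real (ln (real (M d))) * F d)"
        unfolding r using q0 by (simp add: field_simps del: of_nat_power)
    qed
    finally show ?thesis unfolding sumF by (simp only: sum.distrib sum_subtractf sum_distrib_left)
  qed

  have LL: "Lcm (k ` {..<n}) div Lcm (d ` {..<n}) = L d" for d by (simp add: L_def K_def M_def)
  have inner2: "(\<Sum>j\<in>{0..K^a}. if M d ^ a dvd j then complex_of_nat (K^a choose j) else 0)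
     = of_nat (2^(K^a)) * of_real (\<Sum>l=1..M d ^ a. (-1)^(l * L d ^ a) * cos (pi * real l / real (M d ^ a))^(K^a)) / of_nat (M d ^ a)"
    if d: "d \<in> D" for d
  proof -
    have q0: "complex_of_nat (M d ^ a) \<noteq> 0" using dprops[OF d] by (simp del: of_nat_power)
    have "of_nat (M d ^ a) * (\<Sum>j=0..K^a. if M d ^ a dvd j then of_nat (K^a choose j) else (0::complex))
      = of_nat (2^(K^a)) * of_real (\<Sum>l=1..M d ^ a. (-1)^(l * L d ^ a) * cos (pi * real l / real (M d ^ a))^(K^a))"
      by (rule binom_filter[OF qpos[OF d] Ka[OF d]])
    thus ?thesis using q0 by (simp add: nonzero_eq_divide_eq mult.commute del: of_nat_power)
  qed
  have P2: "(\<Sum>j=0..K^a. of_nat (K^a choose j) * G j)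
       = of_nat (2 ^ (K^a)) * (\<Sum>d\<in>D. F d / of_nat (M d ^ a) *
           of_real (\<Sum>l=1..M d ^ a. (-1) ^ (l * (Lcm (k ` {..<n}) div Lcm (d ` {..<n})) ^ a) * cos (pi * real l / real (M d ^ a)) ^ (K^a)))"
  proof -
    have "(\<Sum>j=0..K^a. of_nat (K^a choose j) * G j)
        = (\<Sum>d\<in>D. F d * (\<Sum>j\<in>{0..K^a}. if M d ^ a dvd j then complex_of_nat (K^a choose j) else 0))"
      unfolding Gexp by (rule swap_lemma) (simp_all add: finD)
    also have "\<dots> = (\<Sum>d\<in>D. F d * (of_nat (2^(K^a)) * of_real (\<Sum>l=1..M d ^ a. (-1)^(l * L d ^ a) * cos (pi * real l / real (M d ^ a))^(K^a)) / of_nat (M d ^ a)))"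
      by (intro sum.cong refl) (simp only: inner2)
    finally show ?thesis unfolding LL sum_distrib_left by (simp add: mult_ac del: of_nat_power)
  qed

  have inner3: "(\<Sum>j\<in>{0..<K^a}. if M d ^ a dvd j then complex_of_real (bernpoly m (real j / real (K^a))) else 0)
     = of_real (real (L d ^ a) * (1 / real (L d ^ a))^m * bernoulli_num m)" if d: "d \<in> D" for d m
  proof -
    have "(\<Sum>j\<in>{0..<K^a}. if M d ^ a dvd j then complex_of_real (bernpoly m (real j / real (K^a))) else 0)
        = (\<Sum>t\<in>{..<L d ^ a}. complex_of_real (bernpoly m (real (M d ^ a * t) / real (K^a))))"
      unfolding Ka[OF d] by (rule dvd_reindex[OF qpos[OF d] _ set_eq3[OF qpos[OF d]]]) auto
    also have "\<dots> = of_real (\<Sum>t\<in>{..<L d ^ a}. bernpoly m (real t / real (L d ^ a)))"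
      unfolding of_real_sum Ka[OF d] using dprops[OF d] by (intro sum.cong refl) simp
    also have "\<dots> = of_real (real (L d ^ a) * (1 / real (L d ^ a))^m * bernoulli_num m)"
      using dprops[OF d] by (subst raabe) auto
    finally show ?thesis .
  qed
  have P3: "(\<Sum>j=0..<K^a. of_real (bernpoly m (real j / real (K^a))) * G j)
       = of_real (bernoulli_num m / real K powi (int a * (int m - 1)))
           * (\<Sum>d\<in>D. of_real (real (M d) powi (int a * (int m - 1))) * F d)" for m
  proof -
    have "(\<Sum>j=0..<K^a. of_real (bernpoly m (real j / real (K^a))) * G j)
        = (\<Sum>d\<in>D. F d * (\<Sum>j\<in>{0..<K^a}. if M d ^ a dvd j then complex_of_real (bernpoly m (real j / real (K^a))) else 0))"
      unfolding Gexp by (rule swap_lemma) (simp_all add: finD)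
    also have "\<dots> = (\<Sum>d\<in>D. F d * of_real (real (L d ^ a) * (1 / real (L d ^ a))^m * bernoulli_num m))"
      by (intro sum.cong refl) (simp only: inner3)
    also have "\<dots> = (\<Sum>d\<in>D. of_real (bernoulli_num m / real K powi (int a * (int m - 1))) * (of_real (real (M d) powi (int a * (int m - 1))) * F d))"
    proof (intro sum.cong refl)
      fix d assume d: "d \<in> D"
      have KML: "real K = real (M d) * real (L d)" using dprops[OF d] by (metis of_nat_mult)
      have r: "real (L d ^ a) * (1 / real (L d ^ a))^m * bernoulli_num m
          = bernoulli_num m / real K powi (int a * (int m - 1)) * real (M d) powi (int a * (int m - 1))"
        unfolding KML of_nat_power by (rule real_id3[OF MLpos[OF d]])
      show "F d * of_real (real (L d ^ a) * (1 / real (L d ^ a))^m * bernoulli_num m)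
         = of_real (bernoulli_num m / real K powi (int a * (int m - 1))) * (of_real (real (M d) powi (int a * (int m - 1))) * F d)"
        unfolding r by (simp add: mult_ac del: of_nat_power)
    qed
    finally show ?thesis by (simp only: sum_distrib_left)
  qed
  show ?thesis using P1 P2 P3 by blast
qed

end
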